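(* Let $X$ be a Tychonoff space and let $\tau$ be the $P$-number of $X$. Suppose $X$ has a $\tau$-discrete basis of clopen sets, i.e. a base $\mathcal B=\bigcup_{\alpha<\tau}\mathcal B_\alpha$ for the topology of $X$ consisting of clopen sets, where each $\mathcal B_\alpha$ is a discrete family in $X$. Then $X$ is a generalized ordered space (GO-space).
   Context: All spaces are Tychonoff. The $P$-number of a space $X$ is $|X|$ if $X$ is discrete; otherwise it is the largest cardinal $\tau$ such that the intersection of any family of fewer than $\tau$ open subsets of $X$ is open (equivalently, the minimum cardinality of a family of open sets whose intersection is not open). A family of subsets of $X$ is discrete if every point of $X$ has a neighborhood meeting at most one member of the family. A linearly ordered topological space (LOTS) is a space whose topology is generated by the open intervals and open rays of some linear order; a GO-space (generalized ordered space) is a space homeomorphic to a subspace of a LOTS. *)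

theory Defs
  imports "HOL-Analysis.Analysis"
begin

definition Tychonoff_space :: "'a topology \<Rightarrow> bool" where
  "Tychonoff_space X \<longleftrightarrow> completely_regular_space X \<and> t1_space X"

definition bad_open_families :: "'a topology \<Rightarrow> 'a set set set" where
  "bad_open_families X =
     {F. (\<forall>U\<in>F. openin X U) \<and> \<not> openin X (topspace X \<inter> \<Inter>F)}"

text \<open>If X is discrete it is |X| (represented by the set of singletons of X);
  otherwise it is the minimal cardinality of a family of open sets whose
  intersection is not open.\<close>
definition P_number :: "'a topology \<Rightarrow> 'a set rel" where
  "P_number X =
     (if X = discrete_topology (topspace X)
      then card_of ((\<lambda>x. {x}) ` topspace X)
      else card_of (SOME F. F \<in> bad_open_families X \<and>
                     (\<forall>G\<in>bad_open_families X. (card_of F, card_of G) \<in> ordLeq)))"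

definition discrete_family :: "'a topology \<Rightarrow> 'a set set \<Rightarrow> bool" where
  "discrete_family X \<F> \<longleftrightarrow>
     (\<forall>x\<in>topspace X. \<exists>U. openin X U \<and> x \<in> U \<and>
        (\<forall>A\<in>\<F>. \<forall>B\<in>\<F>. A \<inter> U \<noteq> {} \<and> B \<inter> U \<noteq> {} \<longrightarrow> A = B))"

definition is_base :: "'a topology \<Rightarrow> 'a set set \<Rightarrow> bool" where
  "is_base X \<B> \<longleftrightarrow> (\<forall>B\<in>\<B>. openin X B) \<and>
     (\<forall>U x. openin X U \<and> x \<in> U \<longrightarrow> (\<exists>B\<in>\<B>. x \<in> B \<and> B \<subseteq> U))"

text \<open>The order topology on a set S linearly ordered by r (a reflexive linear
  order on S): generated by open intervals and open rays (and S itself, which is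
  open, so that the topspace is S also when S has at most one point).\<close>
definition order_topology_on :: "'b set \<Rightarrow> 'b rel \<Rightarrow> 'b topology" where
  "order_topology_on S r = topology_generated_by
     ({S} \<union> {{z\<in>S. (a,z) \<in> r \<and> a \<noteq> z} | a. a \<in> S}
          \<union> {{z\<in>S. (z,b) \<in> r \<and> z \<noteq> b} | b. b \<in> S}
          \<union> {{z\<in>S. (a,z) \<in> r \<and> a \<noteq> z \<and> (z,b) \<in> r \<and> z \<noteq> b} | a b. a \<in> S \<and> b \<in> S})"

definition LOTS :: "'b topology \<Rightarrow> bool" where
  "LOTS L \<longleftrightarrow> (\<exists>S r. linear_order_on S r \<and> L = order_topology_on S r)"

definition GO_space_in :: "'b itself \<Rightarrow> 'a topology \<Rightarrow> bool" where
  "GO_space_in _ X \<longleftrightarrow>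
     (\<exists>(L::'b topology) T. LOTS L \<and> T \<subseteq> topspace L \<and> X homeomorphic_space subtopology L T)"

text \<open>The ambient LOTS is taken
  with carrier in 'a \<times> int, which is no restriction (every GO-space embeds in a LOTS
  on a subset of X \<times> {-1,0,1}).\<close>
definition GO_space :: "'a topology \<Rightarrow> bool" where
  "GO_space X \<longleftrightarrow> GO_space_in TYPE('a \<times> int) X"

end

theory Submission
  imports Defs
begin


lemma lex_linear:
  fixes R :: "'a rel" and S :: "('a \<times> int) set"
  assumes lin: "linear_order_on T R" and ST: "\<And>p. p \<in> S \<Longrightarrow> fst p \<in> T"
  defines "r \<equiv> {(p,q). p\<in>S \<and> q\<in>S \<and> (((fst p, fst q)\<in>R \<and> fst p \<noteq> fst q) \<or> (fst p = fst q \<and> snd p \<le> snd q))}"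
  shows "linear_order_on S r"
proof -
  have t: "\<And>a c e. (a,c)\<in>R \<Longrightarrow> (c,e)\<in>R \<Longrightarrow> (a,e)\<in>R" using lin unfolding order_on_defs trans_def by blast
  have an: "\<And>a c. (a,c)\<in>R \<Longrightarrow> (c,a)\<in>R \<Longrightarrow> a = c" using lin unfolding order_on_defs antisym_def by blast
  have tot: "\<And>a c. a \<in> T \<Longrightarrow> c \<in> T \<Longrightarrow> a \<noteq> c \<Longrightarrow> (a,c)\<in>R \<or> (c,a)\<in>R" using lin unfolding order_on_defs total_on_def by blast
  show ?thesis
    unfolding order_on_defs
  proof (intro conjI)
    show "r \<subseteq> S \<times> S" unfolding r_def by auto
    show "refl_on S r" unfolding refl_on_def r_def by auto
    show "antisym r" unfolding antisym_def
    proof (intro allI impI)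
      fix p q assume h: "(p,q)\<in>r" "(q,p)\<in>r"
      have h1: "(fst p, fst q) \<in> R \<and> fst p \<noteq> fst q \<or> fst p = fst q \<and> snd p \<le> snd q"
        "(fst q, fst p) \<in> R \<and> fst q \<noteq> fst p \<or> fst q = fst p \<and> snd q \<le> snd p"
        using h unfolding r_def by auto
      have "fst p = fst q" using h1 an[of "fst p" "fst q"] by argo
      moreover have "snd p = snd q" using h1 calculation by auto
      ultimately show "p = q" by (simp add: prod_eq_iff)
    qed
    show "trans r" unfolding trans_def
    proof (intro allI impI)
      fix p q u assume "(p,q)\<in>r" "(q,u)\<in>r"
      then have pq: "p\<in>S" "q\<in>S" "u\<in>S" "(fst p, fst q) \<in> R \<and> fst p \<noteq> fst q \<or> fst p = fst q \<and> snd p \<le> snd q"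
        "(fst q, fst u) \<in> R \<and> fst q \<noteq> fst u \<or> fst q = fst u \<and> snd q \<le> snd u"
        unfolding r_def by auto
      have "(fst p, fst u) \<in> R \<and> fst p \<noteq> fst u \<or> fst p = fst u \<and> snd p \<le> snd u"
      proof (cases "fst p = fst q")
        case True
        then show ?thesis using pq(4,5) by auto
      next
        case pq1: False
        then have A: "(fst p, fst q) \<in> R" using pq(4) by auto
        show ?thesis
        proof (cases "fst q = fst u")
          case True
          then show ?thesis using A pq1 by auto
        next
          case False
          then have C: "(fst q, fst u) \<in> R" using pq(5) by auto
          have 1: "(fst p, fst u) \<in> R" using t[OF A C] .
          have "fst p \<noteq> fst u"
          proof
            assume "fst p = fst u"
            then have "(fst q, fst p) \<in> R" using C by simp
            then show False using an[OF A] pq1 by simp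
          qed
          then show ?thesis using 1 by simp
        qed
      qed
      then show "(p,u)\<in>r" using pq unfolding r_def by auto
    qed
    show "total_on S r" unfolding total_on_def
    proof (intro ballI impI)
      fix p q assume h: "p \<in> S" "q \<in> S" "p \<noteq> q"
      have "fst p \<in> T" "fst q \<in> T" using ST h by auto
      then show "(p, q) \<in> r \<or> (q, p) \<in> r"
      proof (cases "fst p = fst q")
        case True
        then have "snd p \<le> snd q \<or> snd q \<le> snd p" by linarith
        then show ?thesis using True h(1,2) unfolding r_def by auto
      next
        case False
        then have "(fst p, fst q)\<in>R \<or> (fst q, fst p)\<in>R" using tot \<open>fst p \<in> T\<close> \<open>fst q \<in> T\<close> by blast
        then show ?thesis using False h(1,2) unfolding r_def by auto
      qed
    qed
  qed
qed
lemma GO_from_order: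
  fixes X :: "'a topology" and R :: "'a rel"
  assumes lin: "linear_order_on (topspace X) R"
    and rayL: "\<And>y. y \<in> topspace X \<Longrightarrow> openin X {z\<in>topspace X. (z,y)\<in>R \<and> z\<noteq>y}"
    and rayR: "\<And>y. y \<in> topspace X \<Longrightarrow> openin X {z\<in>topspace X. (y,z)\<in>R \<and> z\<noteq>y}"
    and cvx: "\<And>U x. openin X U \<Longrightarrow> x\<in>U \<Longrightarrow> \<exists>C. openin X C \<and> x\<in>C \<and> C\<subseteq>U \<and>
                 (\<forall>a\<in>C. \<forall>b\<in>C. \<forall>z. (a,z)\<in>R \<and> (z,b)\<in>R \<longrightarrow> z\<in>C)"
  shows "GO_space X"
proof -
  define T where "T = topspace X"
  have Rsub: "R \<subseteq> T \<times> T" and Rrefl: "\<And>x. x\<in>T \<Longrightarrow> (x,x)\<in>R" and Rtrans: "trans R"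
    and Ranti: "antisym R" and Rtot: "total_on T R"
    using lin unfolding T_def order_on_defs refl_on_def by auto
  define S :: "('a \<times> int) set" where "S = {(x,0)|x. x\<in>T} \<union> {(x,-1)|x. x\<in>T \<and> openin X {y\<in>T. (x,y)\<in>R}}
      \<union> {(x,1)|x. x\<in>T \<and> openin X {y\<in>T. (y,x)\<in>R}}"
  define r where "r = {(p,q). p\<in>S \<and> q\<in>S \<and> (((fst p, fst q)\<in>R \<and> fst p \<noteq> fst q) \<or> (fst p = fst q \<and> snd p \<le> snd q))}"
  define L where "L = order_topology_on S r"
  define T' where "T' = (\<lambda>x. (x,0::int)) ` T"
  have ST: "\<And>p. p \<in> S \<Longrightarrow> fst p \<in> T" unfolding S_def by auto
  have S0: "\<And>x. x \<in> T \<Longrightarrow> (x,0) \<in> S" unfolding S_def by auto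
  have lin_r: "linear_order_on S r"
    unfolding r_def by (rule lex_linear[OF lin]) (use ST T_def in auto)
  have topL: "topspace L = S"
    unfolding L_def order_topology_on_def topology_generated_by_topspace
    by (rule equalityI) blast+
  have basisL: "\<And>A. A \<in> {S} \<union> {{z\<in>S. (a,z) \<in> r \<and> a \<noteq> z} | a. a \<in> S}
          \<union> {{z\<in>S. (z,b) \<in> r \<and> z \<noteq> b} | b. b \<in> S}
          \<union> {{z\<in>S. (a,z) \<in> r \<and> a \<noteq> z \<and> (z,b) \<in> r \<and> z \<noteq> b} | a b. a \<in> S \<and> b \<in> S} \<Longrightarrow> openin L A"
    unfolding L_def order_topology_on_def by (rule topology_generated_by_Basis)
  have upL: "openin L {z\<in>S. (a,z) \<in> r \<and> a \<noteq> z}" if "a \<in> S" for a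
    apply (rule basisL) apply (rule UnI1, rule UnI1, rule UnI2)
    unfolding mem_Collect_eq by (rule exI[of _ a]) (simp add: that)
  have downL: "openin L {z\<in>S. (z,b) \<in> r \<and> z \<noteq> b}" if "b \<in> S" for b
    apply (rule basisL) apply (rule UnI1, rule UnI2)
    unfolding mem_Collect_eq by (rule exI[of _ b]) (simp add: that)
  have up: "openin X {x\<in>T. (a,(x,0))\<in>r \<and> a \<noteq> (x,0)}" if aS0: "a \<in> S" for a
  proof -
    obtain a1 k where a: "a = (a1,k)" by fastforce
    consider "k = 0" "a1 \<in> T" | "k = -1" "a1\<in>T" "openin X {y\<in>T. (a1,y)\<in>R}" | "k = 1" "a1 \<in> T"
      using aS0 unfolding a S_def by blast
    then show ?thesis
    proof cases
      case 1
      have "{x\<in>T. (a,(x,0))\<in>r \<and> a \<noteq> (x,0)} = {z\<in>T. (a1,z)\<in>R \<and> z\<noteq>a1}"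
        using 1 aS0 S0 unfolding a r_def by auto
      then show ?thesis using rayR 1 T_def by auto
    next
      case 2
      have "{x\<in>T. (a,(x,0))\<in>r \<and> a \<noteq> (x,0)} = {y\<in>T. (a1,y)\<in>R}"
        using 2 aS0 Rrefl[of a1] S0 unfolding a r_def by auto
      then show ?thesis using 2 by auto
    next
      case 3
      have "{x\<in>T. (a,(x,0))\<in>r \<and> a \<noteq> (x,0)} = {z\<in>T. (a1,z)\<in>R \<and> z\<noteq>a1}"
        using 3 aS0 Rrefl[of a1] S0 unfolding a r_def by auto
      then show ?thesis using rayR 3 T_def by auto
    qed
  qed
  have down: "openin X {x\<in>T. ((x,0),b)\<in>r \<and> (x,0) \<noteq> b}" if aS0: "b \<in> S" for b
  proof -
    obtain a1 k where a: "b = (a1,k)" by fastforce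
    consider "k = 0" "a1 \<in> T" | "k = -1" "a1\<in>T" | "k = 1" "a1 \<in> T" "openin X {y\<in>T. (y,a1)\<in>R}"
      using aS0 unfolding a S_def by blast
    then show ?thesis
    proof cases
      case 1
      have "{x\<in>T. ((x,0),b)\<in>r \<and> (x,0) \<noteq> b} = {z\<in>T. (z,a1)\<in>R \<and> z\<noteq>a1}"
        using 1 aS0 S0 unfolding a r_def by auto
      then show ?thesis using rayL 1 T_def by auto
    next
      case 2
      have "{x\<in>T. ((x,0),b)\<in>r \<and> (x,0) \<noteq> b} = {z\<in>T. (z,a1)\<in>R \<and> z\<noteq>a1}"
        using 2 aS0 Rrefl[of a1] S0 unfolding a r_def by auto
      then show ?thesis using rayL 2 T_def by auto
    next
      case 3
      have "{x\<in>T. ((x,0),b)\<in>r \<and> (x,0) \<noteq> b} = {y\<in>T. (y,a1)\<in>R}"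
        using 3 aS0 Rrefl[of a1] S0 unfolding a r_def by auto
      then show ?thesis using 3 by auto
    qed
  qed
  have trace: "openin X {x\<in>T. (x,0)\<in>W}" if "openin L W" for W
  proof -
    have "generate_topology_on ({S} \<union> {{z\<in>S. (a,z) \<in> r \<and> a \<noteq> z} | a. a \<in> S}
          \<union> {{z\<in>S. (z,b) \<in> r \<and> z \<noteq> b} | b. b \<in> S}
          \<union> {{z\<in>S. (a,z) \<in> r \<and> a \<noteq> z \<and> (z,b) \<in> r \<and> z \<noteq> b} | a b. a \<in> S \<and> b \<in> S}) W"
      using that unfolding L_def order_topology_on_def by (rule openin_topology_generated_by)
    then show ?thesis
    proof (induction rule: generate_topology_on.induct)
      case Empty
      then show ?case by simp
    next
      case (Int a b)
      have "{x\<in>T. (x,0)\<in>a \<inter> b} = {x\<in>T. (x,0)\<in>a} \<inter> {x\<in>T. (x,0)\<in>b}" by auto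
      then show ?case using Int by (simp add: openin_Int)
    next
      case (UN K)
      have "{x\<in>T. (x,0)\<in>\<Union>K} = \<Union>((\<lambda>k. {x\<in>T. (x,0)\<in>k}) ` K)" by auto
      then show ?case using UN by (auto intro!: openin_Union)
    next
      case (Basis s)
      from Basis consider "s = S" | a where "s = {z\<in>S. (a,z) \<in> r \<and> a \<noteq> z}" "a \<in> S"
        | b where "s = {z\<in>S. (z,b) \<in> r \<and> z \<noteq> b}" "b \<in> S"
        | a b where "s = {z\<in>S. (a,z) \<in> r \<and> a \<noteq> z \<and> (z,b) \<in> r \<and> z \<noteq> b}" "a \<in> S \<and> b\<in>S"
        unfolding Un_iff singleton_iff mem_Collect_eq by iprover
      then show ?case
      proof cases
        case 1
        then have "{x\<in>T. (x,0)\<in>s} = T" using S0 by auto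
        then show ?thesis by (simp add: T_def)
      next
        case (2 a)
        then have "{x\<in>T. (x,0)\<in>s} = {x\<in>T. (a,(x,0))\<in>r \<and> a \<noteq> (x,0)}" using S0 by auto
        then show ?thesis using up[OF 2(2)] by simp
      next
        case (3 b)
        then have "{x\<in>T. (x,0)\<in>s} = {x\<in>T. ((x,0),b)\<in>r \<and> (x,0) \<noteq> b}" using S0 by auto
        then show ?thesis using down[OF 3(2)] by simp
      next
        case (4 a b)
        then have "{x\<in>T. (x,0)\<in>s} = {x\<in>T. (a,(x,0))\<in>r \<and> a \<noteq> (x,0)} \<inter> {x\<in>T. ((x,0),b)\<in>r \<and> (x,0) \<noteq> b}" using S0 by auto
        then show ?thesis using openin_Int[OF up[OF conjunct1[OF 4(2)]] down[OF conjunct2[OF 4(2)]]] by simp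
      qed
    qed
  qed
  have T'S: "T' \<subseteq> S" unfolding T'_def S_def by auto
  have hom: "homeomorphic_map X (subtopology L T') (\<lambda>x. (x,0))"
    unfolding homeomorphic_map_def quotient_map_def
  proof (intro conjI allI impI)
    show "(\<lambda>x. (x, 0)) ` topspace X = topspace (subtopology L T')"
      using T'S topL unfolding T'_def T_def by auto
    show "inj_on (\<lambda>x. (x, 0::int)) (topspace X)" by (auto simp: inj_on_def)
    fix U assume U: "U \<subseteq> topspace (subtopology L T')"
    show "openin X {x \<in> topspace X. (x, 0) \<in> U} = openin (subtopology L T') U"
    proof
      assume "openin (subtopology L T') U"
      then obtain W where W: "openin L W" "U = W \<inter> T'" by (auto simp: openin_subtopology)
      have "{x \<in> topspace X. (x, 0) \<in> U} = {x\<in>T. (x,0)\<in>W}" using W unfolding T'_def T_def by auto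
      then show "openin X {x \<in> topspace X. (x, 0) \<in> U}" using trace W by auto
    next
      assume V: "openin X {x \<in> topspace X. (x, 0) \<in> U}"
      show "openin (subtopology L T') U"
        unfolding openin_subopen[of _ U]
      proof
        fix p assume "p \<in> U"
        then obtain x where px: "p = (x,0)" "x \<in> T" using U unfolding T'_def by auto
        have xV: "x \<in> {x \<in> topspace X. (x, 0) \<in> U}" using px \<open>p\<in>U\<close> T_def by auto
        obtain C where C: "openin X C" "x\<in>C" "C \<subseteq> {x \<in> topspace X. (x, 0) \<in> U}"
          and Cc: "\<forall>a\<in>C. \<forall>b\<in>C. \<forall>z. (a,z)\<in>R \<and> (z,b)\<in>R \<longrightarrow> z\<in>C"
          using cvx[OF V xV] by blast
        have CT: "C \<subseteq> T" using C T_def by auto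
        have "\<exists>lo. openin L lo \<and> (x,0)\<in>lo \<and> (\<forall>y. (y,0)\<in>lo \<longrightarrow> (\<exists>a\<in>C. (a,y)\<in>R))"
        proof (cases "\<exists>a\<in>C. (a,x)\<in>R \<and> a\<noteq>x")
          case True
          then obtain a where a: "a\<in>C" "(a,x)\<in>R" "a\<noteq>x" by blast
          have aS: "(a,0) \<in> S" using a CT unfolding S_def by auto
          have xS: "(x,0) \<in> S" using px unfolding S_def by auto
          show ?thesis
          proof (intro exI conjI allI impI)
            show "openin L {z\<in>S. ((a,0),z) \<in> r \<and> (a,0) \<noteq> z}" using aS by (rule upL)
            show "(x,0) \<in> {z\<in>S. ((a,0),z) \<in> r \<and> (a,0) \<noteq> z}" using aS xS a unfolding r_def by auto
            fix y assume "(y,0) \<in> {z\<in>S. ((a,0),z) \<in> r \<and> (a,0) \<noteq> z}"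
            then show "\<exists>a\<in>C. (a,y)\<in>R" using a unfolding r_def by auto
          qed
        next
          case False
          have "{y\<in>T. (x,y)\<in>R} = C \<union> {z\<in>topspace X. (x,z)\<in>R \<and> z\<noteq>x}"
          proof (intro equalityI subsetI)
            fix y assume "y \<in> C \<union> {z\<in>topspace X. (x,z)\<in>R \<and> z\<noteq>x}"
            then show "y \<in> {y\<in>T. (x,y)\<in>R}"
            proof
              assume yC: "y \<in> C"
              then have "y \<in> T" using CT by auto
              then show ?thesis using False yC px(2) Rrefl[of x] Rtot[unfolded total_on_def, rule_format, of x y] by auto
            qed (use C(2) in \<open>auto simp: T_def\<close>)
          qed (use C(2) in \<open>auto simp: T_def\<close>)
          then have op: "openin X {y\<in>T. (x,y)\<in>R}" using rayR[of x] C px T_def by auto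
          have aS: "(x,-1) \<in> S" using op px unfolding S_def by auto
          have xS: "(x,0) \<in> S" using px unfolding S_def by auto
          show ?thesis
          proof (intro exI conjI allI impI)
            show "openin L {z\<in>S. ((x,-1),z) \<in> r \<and> (x,-1) \<noteq> z}" using aS by (rule upL)
            show "(x,0) \<in> {z\<in>S. ((x,-1),z) \<in> r \<and> (x,-1) \<noteq> z}" using aS xS unfolding r_def by auto
            fix y assume "(y,0) \<in> {z\<in>S. ((x,-1),z) \<in> r \<and> (x,-1) \<noteq> z}"
            then have "(x,y)\<in>R \<or> x = y" unfolding r_def by auto
            then show "\<exists>a\<in>C. (a,y)\<in>R" using C(2) Rrefl[of x] px(2) by auto
          qed
        qed
        then obtain lo where lo: "openin L lo" "(x,0)\<in>lo" "\<And>y. (y,0)\<in>lo \<Longrightarrow> (\<exists>a\<in>C. (a,y)\<in>R)"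
          by blast
        have "\<exists>hi. openin L hi \<and> (x,0)\<in>hi \<and> (\<forall>y. (y,0)\<in>hi \<longrightarrow> (\<exists>b\<in>C. (y,b)\<in>R))"
        proof (cases "\<exists>a\<in>C. (x,a)\<in>R \<and> a\<noteq>x")
          case True
          then obtain a where a: "a\<in>C" "(x,a)\<in>R" "a\<noteq>x" by blast
          have aS: "(a,0) \<in> S" using a CT unfolding S_def by auto
          have xS: "(x,0) \<in> S" using px unfolding S_def by auto
          show ?thesis
          proof (intro exI conjI allI impI)
            show "openin L {z\<in>S. (z,(a,0)) \<in> r \<and> z \<noteq> (a,0)}" using aS by (rule downL)
            show "(x,0) \<in> {z\<in>S. (z,(a,0)) \<in> r \<and> z \<noteq> (a,0)}" using aS xS a unfolding r_def by auto
            fix y assume "(y,0) \<in> {z\<in>S. (z,(a,0)) \<in> r \<and> z \<noteq> (a,0)}"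
            then show "\<exists>a\<in>C. (y,a)\<in>R" using a unfolding r_def by auto
          qed
        next
          case False
          have "{y\<in>T. (y,x)\<in>R} = C \<union> {z\<in>topspace X. (z,x)\<in>R \<and> z\<noteq>x}"
          proof (intro equalityI subsetI)
            fix y assume "y \<in> C \<union> {z\<in>topspace X. (z,x)\<in>R \<and> z\<noteq>x}"
            then show "y \<in> {y\<in>T. (y,x)\<in>R}"
            proof
              assume yC: "y \<in> C"
              then have "y \<in> T" using CT by auto
              then show ?thesis using False yC px(2) Rrefl[of x] Rtot[unfolded total_on_def, rule_format, of x y] by auto
            qed (use C(2) in \<open>auto simp: T_def\<close>)
          qed (use C(2) in \<open>auto simp: T_def\<close>)
          then have op: "openin X {y\<in>T. (y,x)\<in>R}" using rayL[of x] C px T_def by auto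
          have aS: "(x,1) \<in> S" using op px unfolding S_def by auto
          have xS: "(x,0) \<in> S" using px unfolding S_def by auto
          show ?thesis
          proof (intro exI conjI allI impI)
            show "openin L {z\<in>S. (z,(x,1)) \<in> r \<and> z \<noteq> (x,1)}" using aS by (rule downL)
            show "(x,0) \<in> {z\<in>S. (z,(x,1)) \<in> r \<and> z \<noteq> (x,1)}" using aS xS unfolding r_def by auto
            fix y assume "(y,0) \<in> {z\<in>S. (z,(x,1)) \<in> r \<and> z \<noteq> (x,1)}"
            then have "(y,x)\<in>R \<or> x = y" unfolding r_def by auto
            then show "\<exists>a\<in>C. (y,a)\<in>R" using C(2) Rrefl[of x] px(2) by auto
          qed
        qed
        then obtain hi where hi: "openin L hi" "(x,0)\<in>hi" "\<And>y. (y,0)\<in>hi \<Longrightarrow> (\<exists>b\<in>C. (y,b)\<in>R)"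
          by blast
        show "\<exists>T. openin (subtopology L T') T \<and> p \<in> T \<and> T \<subseteq> U"
        proof (intro exI conjI)
          show "openin (subtopology L T') (lo \<inter> hi \<inter> T')"
            unfolding openin_subtopology using openin_Int[OF lo(1) hi(1)] by (intro exI[of _ "lo \<inter> hi"]) simp
          show "p \<in> lo \<inter> hi \<inter> T'" using px lo hi unfolding T'_def by auto
          show "lo \<inter> hi \<inter> T' \<subseteq> U"
          proof
            fix q assume q: "q \<in> lo \<inter> hi \<inter> T'"
            then obtain y where y: "q = (y,0)" "y \<in> T" unfolding T'_def by auto
            obtain a b where "a\<in>C" "b\<in>C" "(a,y)\<in>R" "(y,b)\<in>R" using lo(3) hi(3) q y by blast
            then have "y \<in> C" using Cc by blast
            then show "q \<in> U" using C y by auto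
          qed
        qed
      qed
    qed
  qed
  show ?thesis
    unfolding GO_space_def GO_space_in_def
  proof (intro exI conjI)
    show "LOTS L" using lin_r unfolding LOTS_def L_def by (intro exI[of _ S] exI[of _ r]) simp
    show "T' \<subseteq> topspace L" using T'S topL by simp
    show "X homeomorphic_space subtopology L T'" using hom by (rule homeomorphic_map_imp_homeomorphic_space)
  qed
qed



lemma Pnum_open:
  assumes op: "\<forall>U\<in>F. openin X U" and sm: "(card_of F, P_number X) \<in> ordLess"
  shows "openin X (topspace X \<inter> \<Inter>F)"
proof (cases "X = discrete_topology (topspace X)")
  case True
  have "\<And>A. A \<subseteq> topspace X \<Longrightarrow> openin X A" using True by (metis openin_discrete_topology)
  then show ?thesis by blast
next
  case False
  show ?thesis
  proof (rule ccontr)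
    assume nop: "\<not> ?thesis"
    have FB: "F \<in> bad_open_families X" using op nop unfolding bad_open_families_def by auto
    obtain r0 where r0: "r0 \<in> card_of ` bad_open_families X"
      "\<forall>r'\<in>card_of ` bad_open_families X. (r0, r') \<in> ordLeq"
      using exists_minim_Card_order[of "card_of ` bad_open_families X"] FB card_of_Card_order by blast
    then obtain F0 where F0: "F0 \<in> bad_open_families X" "\<forall>G\<in>bad_open_families X. (card_of F0, card_of G) \<in> ordLeq"
      by auto
    define P where "P = (\<lambda>F. F \<in> bad_open_families X \<and> (\<forall>G\<in>bad_open_families X. (card_of F, card_of G) \<in> ordLeq))"
    have "P (SOME F. P F)" by (rule someI[of P F0]) (use F0 in \<open>simp add: P_def\<close>)
    then have 1: "(card_of (SOME F. P F), card_of F) \<in> ordLeq" using FB unfolding P_def by blast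
    have "P_number X = card_of (SOME F. P F)" unfolding P_number_def P_def using False by simp
    then have "(card_of F, card_of (SOME F. P F)) \<in> ordLess" using sm by simp
    then show False using 1 not_ordLess_ordLeq by blast
  qed
qed

theorem theorem2p1:
  fixes X :: "'a topology" and I :: "'i set" and \<B> :: "'i \<Rightarrow> 'a set set"
  assumes "Tychonoff_space X"
    and "(card_of I, P_number X) \<in> ordLeq"
    and "is_base X (\<Union>i\<in>I. \<B> i)"
    and "\<forall>i\<in>I. \<forall>B\<in>\<B> i. openin X B \<and> closedin X B"
    and "\<forall>i\<in>I. discrete_family X (\<B> i)"
  shows "GO_space X"
proof -
  define T where "T = topspace X"
  have t1: "t1_space X" using assms(1) unfolding Tychonoff_space_def by blast
  have Bop: "\<And>i B. i \<in> I \<Longrightarrow> B \<in> \<B> i \<Longrightarrow> openin X B" using assms(4) by blast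
  have Bcl: "\<And>i B. i \<in> I \<Longrightarrow> B \<in> \<B> i \<Longrightarrow> closedin X B" using assms(4) by blast
  define dfam where "dfam i U \<longleftrightarrow> (\<forall>A\<in>\<B> i. \<forall>B\<in>\<B> i. A \<inter> U \<noteq> {} \<and> B \<inter> U \<noteq> {} \<longrightarrow> A = B)" for i U
  have dsc: "\<And>i x. i \<in> I \<Longrightarrow> x \<in> T \<Longrightarrow> \<exists>U. openin X U \<and> x \<in> U \<and> dfam i U"
    using assms(5) unfolding discrete_family_def T_def dfam_def by blast
  have dfamD: "A = B" if "dfam i U" "A \<in> \<B> i" "B \<in> \<B> i" "A \<inter> U \<noteq> {}" "B \<inter> U \<noteq> {}" for i U A B
    using that unfolding dfam_def by blast
  define W where "W = card_of I"
  have Wwo: "well_order_on I W" unfolding W_def by (rule card_of_well_order_on)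
  have WI: "W \<subseteq> I \<times> I" and Wtrans: "trans W" and Wanti: "antisym W" and Wtot: "total_on I W"
    and Wwf: "wf (W - Id)"
    using Wwo unfolding order_on_defs by auto
  have undI: "\<And>i. underS W i \<subseteq> I" using WI unfolding underS_def by auto
  have und_small: "(card_of (underS W i), P_number X) \<in> ordLess" if "i \<in> I" for i
  proof -
    have "(card_of (underS W i), W) \<in> ordLess"
      unfolding W_def by (rule card_of_underS[OF card_of_Card_order]) (simp add: Field_card_of that)
    then show ?thesis using assms(2) ordLess_ordLeq_trans unfolding W_def by blast
  qed
  have W_lt: "i \<in> underS W k \<or> k \<in> underS W i" if "i \<in> I" "k \<in> I" "i \<noteq> k" for i k
    using Wtot that unfolding total_on_def underS_def by blast
  have und_trans: "j \<in> underS W k" if "j \<in> underS W i" "i \<in> underS W k" for i j k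
  proof -
    have "(j,i)\<in>W" "(i,k)\<in>W" "j \<noteq> i" "i \<noteq> k" using that unfolding underS_def by auto
    moreover have "(j,k) \<in> W" using calculation Wtrans unfolding trans_def by blast
    moreover have "j \<noteq> k" using calculation Wanti unfolding antisym_def by blast
    ultimately show ?thesis unfolding underS_def by blast
  qed
  have und_trans': "j \<in> underS W k" if "j \<in> insert i (underS W i)" "i \<in> underS W k" for i j k
    using that und_trans by blast
  define key where "key i x = {B\<in>\<B> i. x\<in>B}" for i x
  have disj: "A = B" if h: "i \<in> I" "A \<in> \<B> i" "B \<in> \<B> i" "x \<in> A" "x \<in> B" for i A B x
  proof -
    have "x \<in> T" using Bop[OF h(1,2)] h(4) openin_subset unfolding T_def by blast
    then obtain U where U: "openin X U" "x \<in> U" "dfam i U"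
      using dsc[OF h(1)] by blast
    have "A \<inter> U \<noteq> {}" "B \<inter> U \<noteq> {}" using h(4,5) U(2) by blast+
    then show ?thesis using dfamD[OF U(3) h(2,3)] by blast
  qed
  define cell where "cell i z = {w\<in>T. key i w = key i z}" for i z
  have cell_open: "openin X (cell i z)" if iI: "i \<in> I" for i z
    unfolding openin_subopen[of X "cell i z"]
  proof
    fix w assume w: "w \<in> cell i z"
    then have wT: "w \<in> T" unfolding cell_def by auto
    obtain U where U: "openin X U" "w \<in> U" and Ud: "dfam i U"
      using dsc[OF iI wT] by blast
    have UT: "U \<subseteq> T" using U openin_subset unfolding T_def by blast
    have sub: "V \<subseteq> cell i z" if "V \<subseteq> U" "\<And>v. v \<in> V \<Longrightarrow> key i v = key i w" for V
      using that w UT unfolding cell_def by auto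
    show "\<exists>V. openin X V \<and> w \<in> V \<and> V \<subseteq> cell i z"
    proof (cases "\<exists>A\<in>\<B> i. A \<inter> U \<noteq> {}")
      case True
      then obtain A where A: "A \<in> \<B> i" "A \<inter> U \<noteq> {}" by blast
      have only: "B = A" if "B \<in> \<B> i" "v \<in> B" "v \<in> U" for B v
      proof -
        have "B \<inter> U \<noteq> {}" using that(2,3) by blast
        then show ?thesis using dfamD[OF Ud that(1) A(1)] A(2) by blast
      qed
      show ?thesis
      proof (cases "w \<in> A")
        case True
        have kw: "key i v = {A}" if "v \<in> U" "v \<in> A" for v
          unfolding key_def using only that A(1) by blast
        show ?thesis
        proof (intro exI conjI)
          show "openin X (U \<inter> A)" using U(1) Bop[OF iI A(1)] by (rule openin_Int)
          show "w \<in> U \<inter> A" using True U(2) by blast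
          show "U \<inter> A \<subseteq> cell i z"
          proof (rule sub)
            show "U \<inter> A \<subseteq> U" by blast
            fix v assume "v \<in> U \<inter> A"
            then show "key i v = key i w" using kw[of v] kw[of w] True U(2) by simp
          qed
        qed
      next
        case False
        have kw: "key i v = {}" if "v \<in> U" "v \<notin> A" for v
          unfolding key_def using only that by blast
        show ?thesis
        proof (intro exI conjI)
          show "openin X (U - A)" using U(1) Bcl[OF iI A(1)] by (rule openin_diff)
          show "w \<in> U - A" using False U(2) by blast
          show "U - A \<subseteq> cell i z"
          proof (rule sub)
            show "U - A \<subseteq> U" by blast
            fix v assume "v \<in> U - A"
            then show "key i v = key i w" using kw[of v] kw[of w] False U(2) by simp
          qed
        qed
      qed
    next
      case False
      have kw: "key i v = {}" if "v \<in> U" for v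
        unfolding key_def using False that by blast
      show ?thesis
      proof (intro exI conjI)
        show "openin X U" by (rule U(1))
        show "w \<in> U" by (rule U(2))
        show "U \<subseteq> cell i z"
          by (rule sub) (use kw U(2) in auto)
      qed
    qed
  qed
  define C where "C i z = {w\<in>T. \<forall>j\<in>insert i (underS W i). key j w = key j z}" for i z
  have C_open: "openin X (C i z)" if iI: "i \<in> I" for i z
  proof -
    have eq: "C i z = (topspace X \<inter> \<Inter>((\<lambda>j. cell j z) ` underS W i)) \<inter> cell i z"
      unfolding C_def cell_def T_def by auto
    have "openin X (topspace X \<inter> \<Inter>((\<lambda>j. cell j z) ` underS W i))"
    proof (rule Pnum_open)
      show "\<forall>U\<in>(\<lambda>j. cell j z) ` underS W i. openin X U" using cell_open undI by blast
      show "(card_of ((\<lambda>j. cell j z) ` underS W i), P_number X) \<in> ordLess"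
        using ordLeq_ordLess_trans[OF card_of_image und_small[OF iI]] .
    qed
    then show ?thesis unfolding eq using cell_open[OF iI] by blast
  qed
  have CT: "C i z \<subseteq> T" for i z unfolding C_def by auto
  have Cself: "z \<in> T \<Longrightarrow> z \<in> C i z" for i z unfolding C_def by auto
  define fd where "fd x y i \<longleftrightarrow> i \<in> I \<and> (\<forall>j\<in>underS W i. key j x = key j y) \<and> key i x \<noteq> key i y" for x y i
  define V where "V = card_of (UNIV :: 'a set set set)"
  have Vlin: "linear_order_on UNIV V" using card_of_well_order_on[of "UNIV :: 'a set set set"]
    unfolding V_def order_on_defs by blast
  have Vanti: "\<And>a b. (a,b)\<in>V \<Longrightarrow> (b,a)\<in>V \<Longrightarrow> a = b" using Vlin unfolding order_on_defs antisym_def by blast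
  have Vtrans: "\<And>a b c. (a,b)\<in>V \<Longrightarrow> (b,c)\<in>V \<Longrightarrow> (a,c)\<in>V" using Vlin unfolding order_on_defs trans_def by blast
  have Vtot: "\<And>a b. a \<noteq> b \<Longrightarrow> (a,b)\<in>V \<or> (b,a)\<in>V" using Vlin unfolding order_on_defs total_on_def by blast
  define lt where "lt x y \<longleftrightarrow> (\<exists>i. fd x y i \<and> (key i x, key i y) \<in> V)" for x y
  define R where "R = {(x,y). x\<in>T \<and> y\<in>T \<and> (x = y \<or> lt x y)}"
  have fd_ex: "\<exists>i. fd x y i" if xy: "x \<in> T" "y \<in> T" "x \<noteq> y" for x y
  proof -
    obtain U where U: "openin X U" "x \<in> U" "y \<notin> U" using t1 xy unfolding t1_space_def T_def by blast
    obtain B where B: "B \<in> (\<Union>i\<in>I. \<B> i)" "x \<in> B" "B \<subseteq> U" using assms(3) U unfolding is_base_def by blast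
    then obtain i0 where i0: "i0 \<in> I" "B \<in> \<B> i0" by blast
    have "B \<in> key i0 x" "B \<notin> key i0 y" using B i0 U unfolding key_def by auto
    then have "key i0 x \<noteq> key i0 y" by blast
    then have "i0 \<in> {i\<in>I. key i x \<noteq> key i y}" using i0 by blast
    then obtain i where i: "i \<in> {i\<in>I. key i x \<noteq> key i y}"
      and m: "\<And>j. (j,i) \<in> W - Id \<Longrightarrow> j \<notin> {i\<in>I. key i x \<noteq> key i y}"
      using wfE_min[OF Wwf \<open>i0 \<in> {i\<in>I. key i x \<noteq> key i y}\<close>] by blast
    have "\<forall>j\<in>underS W i. key j x = key j y"
    proof
      fix j assume j: "j \<in> underS W i"
      then have "(j,i) \<in> W - Id" unfolding underS_def by auto
      then show "key j x = key j y" using m undI j by blast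
    qed
    then show ?thesis using i unfolding fd_def by blast
  qed
  have fdI: "fd x y i" if "i \<in> I" "\<And>j. j \<in> underS W i \<Longrightarrow> key j x = key j y" "key i x \<noteq> key i y" for x y i
    using that unfolding fd_def by blast
  have fdD1: "i \<in> I" if "fd x y i" for x y i using that unfolding fd_def by blast
  have fdD2: "key j x = key j y" if "fd x y i" "j \<in> underS W i" for x y i j using that unfolding fd_def by blast
  have fdD3: "key i x \<noteq> key i y" if "fd x y i" for x y i using that unfolding fd_def by blast
  have fd_sym: "fd y x i" if "fd x y i" for x y i
  proof (rule fdI)
    show "i \<in> I" using fdD1[OF that] .
    show "key j y = key j x" if "j \<in> underS W i" for j using fdD2[OF \<open>fd x y i\<close> that] by simp
    show "key i y \<noteq> key i x" using fdD3[OF that] by simp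
  qed
  have fd_uniq: "i = k" if f1: "fd x y i" and f2: "fd x y k" for x y i k
  proof (rule ccontr)
    assume "i \<noteq> k"
    then have "i \<in> underS W k \<or> k \<in> underS W i" using W_lt fdD1[OF f1] fdD1[OF f2] by blast
    then show False
    proof
      assume "i \<in> underS W k" then show False using fdD2[OF f2] fdD3[OF f1] by blast
    next
      assume "k \<in> underS W i" then show False using fdD2[OF f1] fdD3[OF f2] by blast
    qed
  qed
  have lt_anti: False if lxy: "lt x y" "lt y x" for x y
  proof -
    obtain i k where i: "fd x y i" "(key i x, key i y) \<in> V" and k: "fd y x k" "(key k y, key k x) \<in> V"
      using lxy unfolding lt_def by blast
    have "i = k" using fd_uniq[OF i(1) fd_sym[OF k(1)]] .
    then have "key i x = key i y" using Vanti i(2) k(2) by simp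
    then show False using fdD3[OF i(1)] by simp
  qed
  have lt_trans: "lt x z" if lxy: "lt x y" "lt y z" for x y z
  proof -
    obtain i k where i: "fd x y i" "(key i x, key i y) \<in> V" and k: "fd y z k" "(key k y, key k z) \<in> V"
      using lxy unfolding lt_def by blast
    have iI: "i \<in> I" and kI: "k \<in> I" using fdD1 i k by blast+
    consider "i = k" | "i \<in> underS W k" | "k \<in> underS W i" using W_lt[OF iI kI] by blast
    then show ?thesis
    proof cases
      case 1
      have ne: "key i x \<noteq> key i z"
      proof
        assume e: "key i x = key i z"
        have "(key i y, key i x) \<in> V" using k(2) 1 e by simp
        then have "key i x = key i y" using Vanti i(2) by simp
        then show False using fdD3[OF i(1)] by simp
      qed
      have "fd x z i"
      proof (rule fdI[OF iI _ ne])
        fix j assume "j \<in> underS W i"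
        then show "key j x = key j z" using fdD2[OF i(1)] fdD2[OF k(1)] 1 by metis
      qed
      moreover have "(key i x, key i z) \<in> V" using Vtrans[OF i(2)] k(2) 1 by simp
      ultimately show ?thesis unfolding lt_def by blast
    next
      case 2
      have e: "key i y = key i z" using fdD2[OF k(1) 2] .
      have "fd x z i"
      proof (rule fdI[OF iI])
        fix j assume j: "j \<in> underS W i"
        have "j \<in> underS W k" using und_trans[OF j 2] .
        then show "key j x = key j z" using fdD2[OF i(1) j] fdD2[OF k(1)] by metis
      next
        show "key i x \<noteq> key i z" using fdD3[OF i(1)] e by simp
      qed
      moreover have "(key i x, key i z) \<in> V" using i(2) e by simp
      ultimately show ?thesis unfolding lt_def by blast
    next
      case 3
      have e: "key k x = key k y" using fdD2[OF i(1) 3] .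
      have "fd x z k"
      proof (rule fdI[OF kI])
        fix j assume j: "j \<in> underS W k"
        have "j \<in> underS W i" using und_trans[OF j 3] .
        then show "key j x = key j z" using fdD2[OF i(1)] fdD2[OF k(1) j] by metis
      next
        show "key k x \<noteq> key k z" using fdD3[OF k(1)] e by simp
      qed
      moreover have "(key k x, key k z) \<in> V" using k(2) e by simp
      ultimately show ?thesis unfolding lt_def by blast
    qed
  qed
  have lt_irr: "\<not> lt x x" for x unfolding lt_def using fdD3 by blast
  have lt_tot: "lt x y \<or> lt y x" if xy: "x \<in> T" "y \<in> T" "x \<noteq> y" for x y
  proof -
    obtain i where i: "fd x y i" using fd_ex xy by blast
    have "key i x \<noteq> key i y" using fdD3[OF i] .
    then have "(key i x, key i y) \<in> V \<or> (key i y, key i x) \<in> V" using Vtot by blast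
    then show ?thesis using i fd_sym[OF i] unfolding lt_def by blast
  qed
  have lin: "linear_order_on (topspace X) R"
    unfolding order_on_defs T_def[symmetric]
  proof (intro conjI)
    show "R \<subseteq> T \<times> T" unfolding R_def by auto
    show "refl_on T R" unfolding refl_on_def R_def by auto
    show "trans R" unfolding trans_def R_def using lt_trans by auto
    show "antisym R" unfolding antisym_def R_def using lt_anti by auto
    show "total_on T R" unfolding total_on_def R_def using lt_tot by auto
  qed
  have agreeL: "fd w y i \<and> key i w = key i z" if "fd z y i" "w \<in> C i z" for w y z i
    using that unfolding fd_def C_def by auto
  have agreeR: "fd y w i \<and> key i w = key i z" if "fd y z i" "w \<in> C i z" for w y z i
    using that unfolding fd_def C_def by auto
  have rayL: "openin X {z\<in>topspace X. (z,y)\<in>R \<and> z\<noteq>y}" if "y \<in> topspace X" for y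
  proof -
    have eq: "{z\<in>topspace X. (z,y)\<in>R \<and> z\<noteq>y} = {z\<in>T. lt z y}"
      using that lt_irr unfolding R_def T_def by auto
    show ?thesis unfolding eq openin_subopen[of X "{z\<in>T. lt z y}"]
    proof
      fix z assume z: "z \<in> {z\<in>T. lt z y}"
      then obtain i where i: "fd z y i" "(key i z, key i y) \<in> V" unfolding lt_def by blast
      have "C i z \<subseteq> {z\<in>T. lt z y}"
      proof
        fix w assume "w \<in> C i z"
        then have "fd w y i \<and> key i w = key i z" "w \<in> T" using agreeL[OF i(1)] CT[of i z] by blast+
        then show "w \<in> {z\<in>T. lt z y}" using i unfolding lt_def by auto
      qed
      moreover have "openin X (C i z)" using C_open i unfolding fd_def by blast
      ultimately show "\<exists>U. openin X U \<and> z \<in> U \<and> U \<subseteq> {z\<in>T. lt z y}" using Cself z by blast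
    qed
  qed
  have rayR: "openin X {z\<in>topspace X. (y,z)\<in>R \<and> z\<noteq>y}" if "y \<in> topspace X" for y
  proof -
    have eq: "{z\<in>topspace X. (y,z)\<in>R \<and> z\<noteq>y} = {z\<in>T. lt y z}"
      using that lt_irr unfolding R_def T_def by auto
    show ?thesis unfolding eq openin_subopen[of X "{z\<in>T. lt y z}"]
    proof
      fix z assume z: "z \<in> {z\<in>T. lt y z}"
      then obtain i where i: "fd y z i" "(key i y, key i z) \<in> V" unfolding lt_def by blast
      have "C i z \<subseteq> {z\<in>T. lt y z}"
      proof
        fix w assume "w \<in> C i z"
        then have "fd y w i \<and> key i w = key i z" "w \<in> T" using agreeR[OF i(1)] CT[of i z] by blast+
        then show "w \<in> {z\<in>T. lt y z}" using i unfolding lt_def by auto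
      qed
      moreover have "openin X (C i z)" using C_open i unfolding fd_def by blast
      ultimately show "\<exists>U. openin X U \<and> z \<in> U \<and> U \<subseteq> {z\<in>T. lt y z}" using Cself z by blast
    qed
  qed
  have cvx: "\<exists>C. openin X C \<and> x\<in>C \<and> C\<subseteq>U \<and> (\<forall>a\<in>C. \<forall>b\<in>C. \<forall>z. (a,z)\<in>R \<and> (z,b)\<in>R \<longrightarrow> z\<in>C)"
    if U: "openin X U" "x \<in> U" for U x
  proof -
    obtain B where B: "B \<in> (\<Union>i\<in>I. \<B> i)" "x \<in> B" "B \<subseteq> U" using assms(3) U unfolding is_base_def by blast
    then obtain i where i: "i \<in> I" "B \<in> \<B> i" by blast
    have xT: "x \<in> T" using U openin_subset unfolding T_def by blast
    have sub: "C i x \<subseteq> U"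
    proof
      fix w assume "w \<in> C i x"
      then have "key i w = key i x" unfolding C_def by auto
      then have "B \<in> key i w" using B i unfolding key_def by auto
      then show "w \<in> U" using B unfolding key_def by auto
    qed
    have conv: "z \<in> C i x" if a: "a \<in> C i x" and b: "b \<in> C i x" and az: "(a,z)\<in>R" and zb: "(z,b)\<in>R" for a b z
    proof (rule ccontr)
      assume zC: "z \<notin> C i x"
      have zT: "z \<in> T" using az unfolding R_def by auto
      then obtain j where j: "j \<in> insert i (underS W i)" "key j z \<noteq> key j x" using zC unfolding C_def by auto
      have ka: "\<And>j. j \<in> insert i (underS W i) \<Longrightarrow> key j a = key j x" using a unfolding C_def by auto
      have kb: "\<And>j. j \<in> insert i (underS W i) \<Longrightarrow> key j b = key j x" using b unfolding C_def by auto
      have "a \<noteq> z" using ka j by metis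
      then have "lt a z" using az unfolding R_def by auto
      then obtain m where m: "fd a z m" "(key m a, key m z) \<in> V" unfolding lt_def by blast
      have mI: "m \<in> I" using m unfolding fd_def by auto
      have mi: "m \<in> insert i (underS W i)"
      proof (rule ccontr)
        assume nm: "m \<notin> insert i (underS W i)"
        then have "i \<in> underS W m" using W_lt[OF i(1) mI] by blast
        then have "j \<in> underS W m" using und_trans' j(1) by blast
        then have "key j a = key j z" using m unfolding fd_def by blast
        then show False using ka[OF j(1)] j(2) by simp
      qed
      have below: "\<And>j. j \<in> underS W m \<Longrightarrow> j \<in> insert i (underS W i)"
        using mi und_trans by blast
      have fzb: "fd z b m"
        unfolding fd_def
      proof (intro conjI ballI)
        show "m \<in> I" by (rule mI)
        fix j assume "j \<in> underS W m"
        then have "j \<in> insert i (underS W i)" using below by blast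
        moreover have "key j a = key j z" using fdD2[OF m(1)] \<open>j \<in> underS W m\<close> .
        ultimately show "key j z = key j b" using ka kb by metis
      next
        show "key m z \<noteq> key m b" using fdD3[OF m(1)] ka[OF mi] kb[OF mi] by simp
      qed
      have "z \<noteq> b" using fzb unfolding fd_def by blast
      then have "lt z b" using zb unfolding R_def by auto
      then obtain m' where m': "fd z b m'" "(key m' z, key m' b) \<in> V" unfolding lt_def by blast
      have "m' = m" using fd_uniq m'(1) fzb by blast
      then have "(key m z, key m a) \<in> V" using m' ka[OF mi] kb[OF mi] by simp
      then have "key m a = key m z" using Vanti m(2) by blast
      then show False using m unfolding fd_def by blast
    qed
    show ?thesis
      by (intro exI[of _ "C i x"] conjI C_open i sub Cself xT) (use conv in blast)
  qed
  show ?thesis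
    by (rule GO_from_order[OF lin rayL rayR cvx])
qed

end
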